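(* Let $p,q\in\mathbb{C}$ with $pq\neq 1$. The following two conditions are equivalent: (i) $\mathcal{S}_{p,q}$ maps every positive triangle triple to a positive triangle triple; (ii) either $p=q\neq \tfrac12$, or $p\neq q$ and $\frac{(p-1)(2q-1)}{p-q}\in\mathbb{R}\cup\mathcal{H}^+$, where $\mathcal{H}^+=\{z\in\mathbb{C}:\operatorname{Im}z>0\}$.
   Context: A triangle triple is an ordered triple $(a,b,c)\in\mathbb{C}^3$ with pairwise distinct entries; it is degenerate if $a,b,c$ are collinear, and positive if it is non-degenerate and $\operatorname{Im}\frac{a-b}{c-b}>0$. For $p,q\in\mathbb{C}$ with $pq\neq1$ put $\alpha_{p,q}=\frac{p(1-q)}{1-pq}$, $\beta_{p,q}=\frac{q(1-p)}{1-pq}$, $\gamma_{p,q}=\frac{(1-p)(1-q)}{1-pq}$, and define the linear map $\mathcal{S}_{p,q}:\mathbb{C}^3\to\mathbb{C}^3$ by $\mathcal{S}_{p,q}(a,b,c)=(\alpha_{p,q}a+\beta_{p,q}b+\gamma_{p,q}c,\ \alpha_{p,q}b+\beta_{p,q}c+\gamma_{p,q}a,\ \alpha_{p,q}c+\beta_{p,q}a+\gamma_{p,q}b)$. *)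

theory Defs
  imports "HOL-Analysis.Analysis"
begin

definition triangle_triple :: "complex \<times> complex \<times> complex \<Rightarrow> bool" where
  "triangle_triple t = (case t of (a, b, c) \<Rightarrow> a \<noteq> b \<and> b \<noteq> c \<and> a \<noteq> c)"

definition degenerate :: "complex \<times> complex \<times> complex \<Rightarrow> bool" where
  "degenerate t = (case t of (a, b, c) \<Rightarrow> collinear {a, b, c})"

definition positive_triple :: "complex \<times> complex \<times> complex \<Rightarrow> bool" where
  "positive_triple t = (triangle_triple t \<and> \<not> degenerate t \<and>
     (case t of (a, b, c) \<Rightarrow> Im ((a - b) / (c - b)) > 0))"

definition alpha :: "complex \<Rightarrow> complex \<Rightarrow> complex" where
  "alpha p q = p * (1 - q) / (1 - p * q)"
definition beta :: "complex \<Rightarrow> complex \<Rightarrow> complex" where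
  "beta p q = q * (1 - p) / (1 - p * q)"
definition gamma :: "complex \<Rightarrow> complex \<Rightarrow> complex" where
  "gamma p q = (1 - p) * (1 - q) / (1 - p * q)"

definition S_map :: "complex \<Rightarrow> complex \<Rightarrow> complex \<times> complex \<times> complex \<Rightarrow> complex \<times> complex \<times> complex" where
  "S_map p q t = (case t of (a, b, c) \<Rightarrow>
     (alpha p q * a + beta p q * b + gamma p q * c,
      alpha p q * b + beta p q * c + gamma p q * a,
      alpha p q * c + beta p q * a + gamma p q * b))"

definition upper_half_plane :: "complex set" where
  "upper_half_plane = {z. Im z > 0}"

end

theory Submission
  imports Defs
begin
definition ww :: complex where "ww = Complex (-1/2) (sqrt 3/2)"
lemma s3: "sqrt 3 * sqrt 3 = (3::real)" by simp
lemma ww2: "ww^2 = cnj ww" unfolding ww_def by (simp add: power2_eq_square complex_eq_iff s3)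
lemma wwc: "cnj ww = -1 - ww" unfolding ww_def by (simp add: complex_eq_iff)
lemma ww3: "ww^3 = 1" unfolding ww_def by (simp add: power3_eq_cube complex_eq_iff algebra_simps s3)
lemma key: fixes m u v :: complex shows "Im (((m + u + v) - (m + u * ww + v * ww^2)) * cnj ((m + u * ww^2 + v * ww) - (m + u * ww + v * ww^2)))
   = 3 * sqrt 3 / 2 * ((cmod u)^2 - (cmod v)^2)"
  unfolding ww_def
  by (cases u; cases v; simp only: cmod_power2; simp add: power2_eq_square algebra_simps s3)
lemma key2: fixes A B :: complex shows "(cmod (A + ww*B))^2 - (cmod (A + cnj ww * B))^2 = 2 * sqrt 3 * Im (A * cnj B)"
  unfolding ww_def
  by (cases A; cases B; simp only: cmod_power2; simp add: power2_eq_square algebra_simps s3)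

lemma im_div_sign: "Im (x / y) > 0 \<longleftrightarrow> Im (x * cnj y) > 0"
proof (cases "y = 0")
  case True then show ?thesis by simp
next
  case False
  then have n: "(norm y)^2 > 0" by simp
  have "x / y = (x * cnj y) / complex_of_real ((norm y)^2)"
    by (subst complex_div_cnj) simp
  then have "Im (x / y) = Im (x * cnj y) / (norm y)^2" by simp
  then show ?thesis using n by (simp add: divide_pos_pos zero_less_divide_iff)
qed

lemma pos_iff: "positive_triple (a, b, c) \<longleftrightarrow> Im ((a - b) * cnj (c - b)) > 0"
proof
  assume "positive_triple (a, b, c)"
  then show "Im ((a - b) * cnj (c - b)) > 0"
    unfolding positive_triple_def using im_div_sign by simp
next
  assume I: "Im ((a - b) * cnj (c - b)) > 0"
  have cb: "c \<noteq> b" using I by auto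
  have ab: "a \<noteq> b" using I by auto
  have ac: "a \<noteq> c"
  proof
    assume "a = c"
    then have "Im ((a - b) * cnj (c - b)) = 0"
      by (simp add: algebra_simps)
    then show False using I by simp
  qed
  have nc: "\<not> collinear {a, b, c}"
  proof
    assume "collinear {a, b, c}"
    then have "collinear {0, a - b, c - b}"
      using collinear_3[of a b c] by simp
    then obtain r where r: "c - b = r *\<^sub>R (a - b)"
      using collinear_lemma[of "a - b" "c - b"] ab cb by auto
    have "Im ((a - b) * cnj (c - b)) = r * Im ((a - b) * cnj (a - b))"
      unfolding r by (simp add: scaleR_conv_of_real algebra_simps)
    also have "Im ((a - b) * cnj (a - b)) = 0" by (simp add: algebra_simps)
    finally show False using I by simp
  qed
  have "Im ((a - b) / (c - b)) > 0" using im_div_sign I by blast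
  then show "positive_triple (a, b, c)"
    unfolding positive_triple_def triangle_triple_def degenerate_def
    using cb ab ac nc by auto
qed

lemma wwq: "ww^2 + ww + 1 = 0" using ww2 wwc by simp

lemma sq_less: "0 \<le> x \<Longrightarrow> 0 \<le> y \<Longrightarrow> x < y \<longleftrightarrow> x^2 < (y::real)^2"
  by (metis abs_le_square_iff abs_of_nonneg not_le)
lemma sq_le: "0 \<le> x \<Longrightarrow> 0 \<le> y \<Longrightarrow> x \<le> y \<longleftrightarrow> x^2 \<le> (y::real)^2"
  by (metis abs_le_square_iff abs_of_nonneg)

definition TT :: "complex \<Rightarrow> complex \<Rightarrow> complex \<Rightarrow> complex \<times> complex \<times> complex" where
  "TT m u v = (m + u + v, m + u * ww + v * ww^2, m + u * ww^2 + v * ww)"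

lemma posT: "positive_triple (TT m u v) \<longleftrightarrow> cmod v < cmod u"
proof -
  have "positive_triple (TT m u v) \<longleftrightarrow> 3 * sqrt 3 / 2 * ((cmod u)^2 - (cmod v)^2) > 0"
    unfolding TT_def pos_iff key ..
  also have "\<dots> \<longleftrightarrow> (cmod v)^2 < (cmod u)^2" by (simp add: zero_less_mult_iff)
  also have "\<dots> \<longleftrightarrow> cmod v < cmod u" using sq_less[of "cmod v" "cmod u"] by simp
  finally show ?thesis .
qed

lemma decomp: "\<exists>m u v. (a, b, c) = TT m u v"
proof (intro exI)
  show "(a, b, c) = TT ((a + b + c) / 3) ((a + b * ww^2 + c * ww) / 3) ((a + b * ww + c * ww^2) / 3)"
    unfolding TT_def using wwq by (simp; algebra)
qed

lemma abg: assumes h: "p * q \<noteq> 1" shows "alpha p q + beta p q + gamma p q = 1"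
proof -
  have d: "1 - p * q \<noteq> 0" using h by simp
  have "alpha p q + beta p q + gamma p q = (p*(1-q) + q*(1-p) + (1-p)*(1-q)) / (1 - p*q)"
    unfolding alpha_def beta_def gamma_def by (simp add: add_divide_distrib)
  also have "p*(1-q) + q*(1-p) + (1-p)*(1-q) = 1 - p*q" by (simp add: algebra_simps)
  finally show ?thesis using d by simp
qed

lemma S_T:
  assumes "alpha p q + beta p q + gamma p q = 1"
  shows "S_map p q (TT m u v) = TT m ((alpha p q + beta p q * ww + gamma p q * ww^2) * u)
                                  ((alpha p q + beta p q * ww^2 + gamma p q * ww) * v)"
  unfolding S_map_def TT_def using assms wwq by (simp; algebra)

lemma Dabg: assumes "p * q \<noteq> 1"
  shows "(1 - p*q) * alpha p q = p*(1-q)" "(1 - p*q) * beta p q = q*(1-p)" "(1 - p*q) * gamma p q = (1-p)*(1-q)"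
  using assms by (simp_all add: alpha_def beta_def gamma_def)

lemma L1: assumes h: "p * q \<noteq> 1" shows "(1 - p * q) * (alpha p q + beta p q * ww + gamma p q * ww^2)
   = (2*p - 1) * (1 - q) + ww * ((2*q - 1) * (1 - p))"
proof -
  have d: "1 - p * q \<noteq> 0" using h by simp
  have e: "(1 - p * q) * (alpha p q + beta p q * ww + gamma p q * ww^2) = p*(1-q) + q*(1-p)*ww + (1-p)*(1-q)*ww^2"
    using Dabg[OF h] by (simp add: distrib_left mult.assoc[symmetric])
  show ?thesis unfolding e using wwq by algebra
qed

lemma L2: assumes h: "p * q \<noteq> 1" shows "(1 - p * q) * (alpha p q + beta p q * ww^2 + gamma p q * ww)
   = (2*p - 1) * (1 - q) + cnj ww * ((2*q - 1) * (1 - p))"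
proof -
  have d: "1 - p * q \<noteq> 0" using h by simp
  have e: "(1 - p * q) * (alpha p q + beta p q * ww^2 + gamma p q * ww) = p*(1-q) + q*(1-p)*ww^2 + (1-p)*(1-q)*ww"
    using Dabg[OF h] by (simp add: distrib_left mult.assoc[symmetric])
  show ?thesis unfolding e wwc using wwq by algebra
qed

lemma imAB: "B = - z * d \<Longrightarrow> Im ((B + d) * cnj B) = (cmod d)^2 * Im z"
  by (cases z; cases d; simp only: cmod_power2; simp add: power2_eq_square algebra_simps)

lemma imW: "Im ((- ww * B) * cnj B) = - sqrt 3 / 2 * (cmod B)^2"
  unfolding ww_def by (cases B; simp only: cmod_power2; simp add: power2_eq_square algebra_simps)


theorem proposition2p1:
  fixes p q :: complex
  assumes "p * q \<noteq> 1"
  shows "(\<forall>t. positive_triple t \<longrightarrow> positive_triple (S_map p q t)) \<longleftrightarrow>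
         ((p = q \<and> p \<noteq> 1/2) \<or>
          (p \<noteq> q \<and> (p - 1) * (2 * q - 1) / (p - q) \<in> \<real> \<union> upper_half_plane))"
proof -
  define l1 where "l1 = alpha p q + beta p q * ww + gamma p q * ww^2"
  define l2 where "l2 = alpha p q + beta p q * ww^2 + gamma p q * ww"
  define A where "A = (2*p - 1) * (1 - q)"
  define B where "B = (2*q - 1) * (1 - p)"
  define D where "D = 1 - p * q"
  have D0: "D \<noteq> 0" using assms unfolding D_def by simp
  have ST: "\<And>m u v. S_map p q (TT m u v) = TT m (l1 * u) (l2 * v)"
    unfolding l1_def l2_def using S_T[OF abg[OF assms]] .
  have step1: "(\<forall>t. positive_triple t \<longrightarrow> positive_triple (S_map p q t)) \<longleftrightarrow>
      (l1 \<noteq> 0 \<and> cmod l2 \<le> cmod l1)"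
  proof
    assume P: "\<forall>t. positive_triple t \<longrightarrow> positive_triple (S_map p q t)"
    have "positive_triple (TT 0 1 0)" using posT by simp
    then have "positive_triple (S_map p q (TT 0 1 0))" using P by blast
    then have "positive_triple (TT 0 l1 0)" using ST[of 0 1 0] by simp
    then have nz: "l1 \<noteq> 0" using posT by simp
    have "cmod l2 \<le> cmod l1"
    proof (rule ccontr)
      assume "\<not> cmod l2 \<le> cmod l1"
      then have lt: "cmod l1 < cmod l2" by simp
      then have n2: "cmod l2 > 0" by (smt (verit) norm_ge_zero)
      define x where "x = cmod l1 / cmod l2"
      define r where "r = (x + 1) / 2"
      have q1: "x < 1" using lt n2 unfolding x_def by simp
      have q0: "0 \<le> x" unfolding x_def by simp
      have r1: "r < 1" "0 \<le> r" using q1 q0 unfolding r_def by simp_all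
      have r2: "cmod l1 / cmod l2 < r" using q1 unfolding r_def x_def[symmetric] by (simp add: field_simps)
      have "positive_triple (TT 0 1 (complex_of_real r))" using posT r1 by simp
      then have "positive_triple (S_map p q (TT 0 1 (complex_of_real r)))" using P by blast
      then have "positive_triple (TT 0 l1 (l2 * complex_of_real r))" using ST[of 0 1] by simp
      then have "cmod l2 * r < cmod l1" using posT r1 by (simp add: norm_mult)
      moreover have "cmod l1 < cmod l2 * r" using r2 n2 by (simp add: divide_less_eq mult.commute)
      ultimately show False by simp
    qed
    then show "l1 \<noteq> 0 \<and> cmod l2 \<le> cmod l1" using nz by simp
  next
    assume H: "l1 \<noteq> 0 \<and> cmod l2 \<le> cmod l1"
    show "\<forall>t. positive_triple t \<longrightarrow> positive_triple (S_map p q t)"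
    proof (intro allI impI)
      fix t assume pt: "positive_triple t"
      obtain a b c where t: "t = (a, b, c)" by (cases t) auto
      obtain m u v where muv: "t = TT m u v" using decomp t by metis
      have uv: "cmod v < cmod u" using pt posT muv by simp
      have "cmod l2 * cmod v \<le> cmod l1 * cmod v" using H by (simp add: mult_right_mono)
      also have "\<dots> < cmod l1 * cmod u" using H uv by simp
      finally have "cmod (l2 * v) < cmod (l1 * u)" by (simp add: norm_mult)
      then show "positive_triple (S_map p q t)" using muv ST posT by simp
    qed
  qed
  have e1: "D * l1 = A + ww * B" unfolding D_def l1_def A_def B_def using L1[OF assms] .
  have e2: "D * l2 = A + cnj ww * B" unfolding D_def l2_def A_def B_def using L2[OF assms] .
  have step2: "(l1 \<noteq> 0 \<and> cmod l2 \<le> cmod l1) \<longleftrightarrow> (A + ww * B \<noteq> 0 \<and> Im (A * cnj B) \<ge> 0)"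
  proof -
    have a: "l1 \<noteq> 0 \<longleftrightarrow> A + ww * B \<noteq> 0" using e1 D0 by (metis mult_eq_0_iff)
    have "cmod l2 \<le> cmod l1 \<longleftrightarrow> cmod D * cmod l2 \<le> cmod D * cmod l1" using D0 by simp
    also have "\<dots> \<longleftrightarrow> cmod (A + cnj ww * B) \<le> cmod (A + ww * B)"
      using e1 e2 by (metis norm_mult)
    also have "\<dots> \<longleftrightarrow> (cmod (A + cnj ww * B))^2 \<le> (cmod (A + ww * B))^2"
      by (rule sq_le) simp_all
    also have "\<dots> \<longleftrightarrow> 0 \<le> 2 * sqrt 3 * Im (A * cnj B)" unfolding key2[of A B, symmetric] by linarith
    also have "\<dots> \<longleftrightarrow> Im (A * cnj B) \<ge> 0" by (simp add: zero_le_mult_iff)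
    finally show ?thesis using a by simp
  qed
  have step3: "(A + ww * B \<noteq> 0 \<and> Im (A * cnj B) \<ge> 0) \<longleftrightarrow> ((p = q \<and> p \<noteq> 1/2) \<or>
          (p \<noteq> q \<and> (p - 1) * (2 * q - 1) / (p - q) \<in> \<real> \<union> upper_half_plane))"
  proof (cases "p = q")
    case True
    then have AB: "A = B" unfolding A_def B_def by (simp add: algebra_simps)
    have p1: "p \<noteq> 1" using assms True by auto
    have w1: "1 + ww \<noteq> 0" unfolding ww_def by (simp add: complex_eq_iff)
    have "Im (A * cnj B) = 0" unfolding AB by (simp add: algebra_simps)
    moreover have "A + ww * B \<noteq> 0 \<longleftrightarrow> p \<noteq> 1/2"
    proof -
      have "A + ww * B = (1 + ww) * A" using AB by (simp add: algebra_simps)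
      then have "A + ww * B \<noteq> 0 \<longleftrightarrow> A \<noteq> 0" using w1 by simp
      also have "\<dots> \<longleftrightarrow> 2*p - 1 \<noteq> 0" unfolding A_def using p1 True by simp
      also have "\<dots> \<longleftrightarrow> p \<noteq> 1/2" by (auto simp: field_simps)
      finally show ?thesis .
    qed
    ultimately show ?thesis using True by simp
  next
    case False
    define z where "z = (p - 1) * (2 * q - 1) / (p - q)"
    have pq: "p - q \<noteq> 0" using False by simp
    have Bz: "B = - z * (p - q)" unfolding z_def B_def using pq by (simp add: field_simps)
    have Az: "A = B + (p - q)" unfolding A_def B_def by (simp add: algebra_simps)
    have im: "Im (A * cnj B) = (cmod (p - q))^2 * Im z" unfolding Az using imAB[OF Bz] .
    have n: "(cmod (p - q))^2 > 0" using pq by simp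
    have i1: "Im (A * cnj B) \<ge> 0 \<longleftrightarrow> Im z \<ge> 0" unfolding im using n
      by (simp add: zero_le_mult_iff)
    have i2: "z \<in> \<real> \<union> upper_half_plane \<longleftrightarrow> Im z \<ge> 0"
      unfolding upper_half_plane_def by (auto simp: complex_is_Real_iff)
    have i3: "A + ww * B \<noteq> 0" if g: "Im (A * cnj B) \<ge> 0"
    proof
      assume h: "A + ww * B = 0"
      then have "A = - ww * B" by (simp add: eq_neg_iff_add_eq_0)
      then have "Im (A * cnj B) = - sqrt 3 / 2 * (cmod B)^2" using imW by simp
      then have "(cmod B)^2 \<le> 0" using g by (simp add: mult_le_0_iff)
      then have "B = 0" by simp
      then show False using h Az pq by simp
    qed
    have e: "(A + ww * B \<noteq> 0 \<and> Im (A * cnj B) \<ge> 0) \<longleftrightarrow> z \<in> \<real> \<union> upper_half_plane"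
      using i1 i2 i3 by blast
    show ?thesis using False e unfolding z_def by blast
  qed
  show ?thesis using step1 step2 step3 by simp
qed

end
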